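(* Let $T$ be an LMSR tree with liquidity parameter $b>0$, let $\alpha\in\Omega$, and let $I=[\alpha,1)$. Consider the following procedure (Algorithm 1). Initialize $z\gets\mathit{root}$, $P\gets 1$, $\mathit{price}\gets 0$. While $\alpha_z\neq\alpha$ and $z$ is not a leaf: set $P\gets P\,e^{s_z/b}$; if $\alpha<\alpha_{\mathrm{right}(z)}$ then set $\mathit{price}\gets\mathit{price}+P\,S_{\mathrm{right}(z)}/S_{\mathit{root}}$ and $z\gets\mathrm{left}(z)$, otherwise set $z\gets\mathrm{right}(z)$. After the loop, return $$\mathit{price}+\frac{\beta_z-\alpha}{\beta_z-\alpha_z}\cdot \frac{P\,S_z}{S_{\mathit{root}}}.$$ Then the procedure returns exactly the LMSR price $p_{I\cap\Omega}(\boldsymbol\theta(T))$ of the bundle security for $I$ in the market state $\boldsymbol\theta(T)$ represented by $T$, and it runs in time $\mathcal O(\log n_{\mathit{vals}})$ (counting arithmetic operations, including exponentials, as unit cost), where $n_{\mathit{vals}}=|\{\alpha_z: z\in T\}|$ is the number of distinct left endpoints of node intervals of $T$.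
   Context: Fix an integer $K\ge 1$, $N=2^K$, and the outcome set $\Omega=\{j/N: j=0,1,\dots,N-1\}$. Fix a liquidity parameter $b>0$. For a state $\boldsymbol\theta\in\mathbb R^{\Omega}$ and an event $E\subseteq\Omega$, the LMSR price of the bundle security for $E$ is $p_E(\boldsymbol\theta)=\sum_{\omega\in E}e^{\theta_\omega/b}\big/\sum_{\nu\in\Omega}e^{\theta_\nu/b}$. An interval $[\alpha,\beta)$ is identified with the event $[\alpha,\beta)\cap\Omega$. An LMSR tree is a full binary tree (every node $z$ is either a leaf or has exactly two children $\mathrm{left}(z)$, $\mathrm{right}(z)$) in which each node $z$ carries an interval $I_z=[\alpha_z,\beta_z)$ with $\alpha_z,\beta_z\in\Omega\cup\{1\}$, a height $h_z\ge 0$, a real number $s_z$ (shares held at $z$), and a number $S_z\ge 0$ (partial normalization constant), such that: (i) binary-search property: $I_{\mathit{root}}=[0,1)$ and for every inner node $z$, $\alpha_z=\alpha_{\mathrm{left}(z)}<\beta_{\mathrm{left}(z)}=\alpha_{\mathrm{right}(z)}<\beta_{\mathrm{right}(z)}=\beta_z$; (ii) height balance: $h_z=0$ for leaves and, for inner $z$, $h_z=1+\max\{h_{\mathrm{left}(z)},h_{\mathrm{right}(z)}\}$ and $|h_{\mathrm{left}(z)}-h_{\mathrm{right}(z)}|\le 1$; (iii) partial-normalization correctness: $S_z=e^{s_z/b}(\beta_z-\alpha_z)$ for leaves and $S_z=e^{s_z/b}(S_{\mathrm{left}(z)}+S_{\mathrm{right}(z)})$ for inner nodes. The market state represented by $T$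 is $\boldsymbol\theta(T)\in\mathbb R^\Omega$ with $\theta_\omega(T)=\sum_{z\in T:\ \omega\in I_z}s_z$. *)

theory Defs
  imports Complex_Main
begin

definition Omega :: "nat \<Rightarrow> real set" where
  "Omega K = {real j / 2 ^ K | j. j < (2::nat) ^ K}"

definition lmsr_price :: "nat \<Rightarrow> real \<Rightarrow> (real \<Rightarrow> real) \<Rightarrow> real set \<Rightarrow> real" where
  "lmsr_price K b theta E =
     (\<Sum>\<omega>\<in>E. exp (theta \<omega> / b)) / (\<Sum>\<nu>\<in>Omega K. exp (theta \<nu> / b))"

text \<open>Tree nodes carry: alpha, beta (interval [alpha,beta)), height h, shares s,
  partial normalisation constant S.\<close>
datatype ltree =
    Leaf real real nat real real
  | Node real real nat real real ltree ltree

fun alpha :: "ltree \<Rightarrow> real" where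
  "alpha (Leaf a _ _ _ _) = a" | "alpha (Node a _ _ _ _ _ _) = a"
fun beta :: "ltree \<Rightarrow> real" where
  "beta (Leaf _ c _ _ _) = c" | "beta (Node _ c _ _ _ _ _) = c"
fun hgt :: "ltree \<Rightarrow> nat" where
  "hgt (Leaf _ _ h _ _) = h" | "hgt (Node _ _ h _ _ _ _) = h"
fun shares :: "ltree \<Rightarrow> real" where
  "shares (Leaf _ _ _ s _) = s" | "shares (Node _ _ _ s _ _ _) = s"
fun pnorm :: "ltree \<Rightarrow> real" where
  "pnorm (Leaf _ _ _ _ S) = S" | "pnorm (Node _ _ _ _ S _ _) = S"

text \<open>Local well-formedness of every node (conditions (ii), (iii), the inner-node part of (i),
  endpoints in Omega \<union> {1}, and S \<ge> 0).\<close>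
fun wf_tree :: "nat \<Rightarrow> real \<Rightarrow> ltree \<Rightarrow> bool" where
  "wf_tree K b (Leaf a c h s S) \<longleftrightarrow>
     a \<in> Omega K \<union> {1} \<and> c \<in> Omega K \<union> {1} \<and> S \<ge> 0 \<and>
     h = 0 \<and> S = exp (s / b) * (c - a)"
| "wf_tree K b (Node a c h s S l r) \<longleftrightarrow>
     a \<in> Omega K \<union> {1} \<and> c \<in> Omega K \<union> {1} \<and> S \<ge> 0 \<and>
     a = alpha l \<and> alpha l < beta l \<and> beta l = alpha r \<and> alpha r < beta r \<and> beta r = c \<and>
     h = 1 + max (hgt l) (hgt r) \<and> \<bar>int (hgt l) - int (hgt r)\<bar> \<le> 1 \<and>
     S = exp (s / b) * (pnorm l + pnorm r) \<and>
     wf_tree K b l \<and> wf_tree K b r"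

definition lmsr_tree :: "nat \<Rightarrow> real \<Rightarrow> ltree \<Rightarrow> bool" where
  "lmsr_tree K b T \<longleftrightarrow> alpha T = 0 \<and> beta T = 1 \<and> wf_tree K b T"

fun theta :: "ltree \<Rightarrow> real \<Rightarrow> real" where
  "theta (Leaf a c _ s _) \<omega> = (if a \<le> \<omega> \<and> \<omega> < c then s else 0)"
| "theta (Node a c _ s _ l r) \<omega> =
     (if a \<le> \<omega> \<and> \<omega> < c then s else 0) + theta l \<omega> + theta r \<omega>"

fun alphas :: "ltree \<Rightarrow> real set" where
  "alphas (Leaf a _ _ _ _) = {a}"
| "alphas (Node a _ _ _ _ l r) = {a} \<union> alphas l \<union> alphas r"

text \<open>Algorithm 1. The loop state is (z, P, price); the last component counts arithmetic
  operations (comparisons, +, *, /, exp, each unit cost).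
  Each loop test costs 2; an iteration costs 3 (P update: division, exp, product),
  1 for the comparison, and 3 more (product, division, sum) when the price is updated.
  The final return costs 7.\<close>
fun alg_loop :: "real \<Rightarrow> real \<Rightarrow> real \<Rightarrow> ltree \<Rightarrow> real \<Rightarrow> real \<Rightarrow> nat \<Rightarrow> real \<times> nat" where
  "alg_loop b a Sroot (Leaf az bz h s S) P price ops =
     (price + (bz - a) / (bz - az) * (P * S / Sroot), ops + 2 + 7)"
| "alg_loop b a Sroot (Node az bz h s S l r) P price ops =
     (if az = a then (price + (bz - a) / (bz - az) * (P * S / Sroot), ops + 2 + 7)
      else (let P' = P * exp (s / b) in
            if a < alpha r
            then alg_loop b a Sroot l P' (price + P' * pnorm r / Sroot) (ops + 2 + 3 + 1 + 3)
            else alg_loop b a Sroot r P' price (ops + 2 + 3 + 1)))"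

definition algorithm1 :: "real \<Rightarrow> real \<Rightarrow> ltree \<Rightarrow> real \<times> nat" where
  "algorithm1 b a T = alg_loop b a (pnorm T) T 1 0 0"

end

theory Submission
  imports Defs
begin

lemma Omega_eq: "Omega K = (\<lambda>j. real j / 2^K) ` {..<2^K}"
  unfolding Omega_def by auto

lemma finite_Omega: "finite (Omega K)" by (simp add: Omega_eq)

lemma endpt: assumes "x \<in> Omega K \<union> {1}" obtains i where "i \<le> 2^K" "x = real i / 2^K"
proof -
  from assms consider "x \<in> Omega K" | "x = 1" by auto
  then show ?thesis
  proof cases
    case 1 then obtain j where "j < 2^K" "x = real j / 2^K" unfolding Omega_def by auto
    then show ?thesis using that[of j] by auto
  next
    case 2 then show ?thesis using that[of "2^K"] by simp
  qed
qed

lemma cnt: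
  assumes "x \<in> Omega K \<union> {1}" "y \<in> Omega K \<union> {1}" "x \<le> y"
  shows "real (card {\<omega>\<in>Omega K. x\<le>\<omega> \<and> \<omega><y}) = 2^K * (y - x)"
proof -
  obtain i where i: "i \<le> 2^K" "x = real i / 2^K" using endpt[OF assms(1)] by blast
  obtain j where j: "j \<le> 2^K" "y = real j / 2^K" using endpt[OF assms(2)] by blast
  have N: "(0::real) < 2^K" by simp
  have ij: "i \<le> j" using assms(3) i j N by (simp add: divide_le_cancel)
  have "{\<omega>\<in>Omega K. x\<le>\<omega> \<and> \<omega><y} = (\<lambda>k. real k / 2^K) ` {i..<j}"
  proof (rule set_eqI, rule iffI)
    fix w assume "w \<in> {\<omega>\<in>Omega K. x\<le>\<omega> \<and> \<omega><y}"
    then obtain k where k: "k < 2^K" "w = real k / 2^K" "x \<le> w" "w < y" unfolding Omega_def by auto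
    then have "i \<le> k" "k < j" using i j N by (simp_all add: divide_le_cancel divide_less_cancel)
    then show "w \<in> (\<lambda>k. real k / 2^K) ` {i..<j}" using k by auto
  next
    fix w assume "w \<in> (\<lambda>k. real k / 2^K) ` {i..<j}"
    then obtain k where k: "i \<le> k" "k < j" "w = real k / 2^K" by auto
    then have "k < 2^K" using j by simp
    then show "w \<in> {\<omega>\<in>Omega K. x\<le>\<omega> \<and> \<omega><y}" using k i j N
      unfolding Omega_def by (auto simp: divide_le_cancel divide_less_cancel)
  qed
  moreover have "inj_on (\<lambda>k. real k / 2^K) {i..<j}" by (rule inj_onI) simp
  ultimately have "card {\<omega>\<in>Omega K. x\<le>\<omega> \<and> \<omega><y} = j - i" by (simp add: card_image)
  then have "real (card {\<omega>\<in>Omega K. x\<le>\<omega> \<and> \<omega><y}) = real j - real i" using ij by (simp add: of_nat_diff)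
  moreover have "2^K * (y - x) = real j - real i" using i j by (simp add: field_simps)
  ultimately show ?thesis by simp
qed

lemma theta_out: "wf_tree K b t \<Longrightarrow> \<not> (alpha t \<le> w \<and> w < beta t) \<Longrightarrow> theta t w = 0"
proof (induction t)
  case (Leaf x1 x2 x3 x4 x5) then show ?case by auto
next
  case (Node x1 x2 x3 x4 x5 l r)
  then show ?case by auto
qed

definition ssum where
  "ssum K b t x = (\<Sum>\<omega>\<in>{\<omega>\<in>Omega K. x\<le>\<omega> \<and> \<omega><beta t}. exp (theta t \<omega> / b))"

lemma split_set: "x \<le> y \<Longrightarrow> y \<le> z \<Longrightarrow>
  {\<omega>\<in>Omega K. x\<le>\<omega> \<and> \<omega><z} = {\<omega>\<in>Omega K. x\<le>\<omega> \<and> \<omega><y} \<union> {\<omega>\<in>Omega K. y\<le>\<omega> \<and> \<omega><z}"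
  by auto

lemma split1:
  assumes "wf_tree K b (Node az bz h s S l r)" "az \<le> x" "x \<le> beta l"
  shows "ssum K b (Node az bz h s S l r) x = exp (s/b) * (ssum K b l x + ssum K b r (alpha r))"
proof -
  have w: "az = alpha l" "alpha l < beta l" "beta l = alpha r" "alpha r < beta r" "beta r = bz"
    "wf_tree K b l" "wf_tree K b r" using assms(1) by auto
  have fin: "finite {\<omega>\<in>Omega K. P \<omega>}" for P using finite_Omega by simp
  have "ssum K b (Node az bz h s S l r) x =
     (\<Sum>\<omega>\<in>{\<omega>\<in>Omega K. x\<le>\<omega> \<and> \<omega><beta l}. exp (theta (Node az bz h s S l r) \<omega> / b)) +
     (\<Sum>\<omega>\<in>{\<omega>\<in>Omega K. beta l\<le>\<omega> \<and> \<omega><bz}. exp (theta (Node az bz h s S l r) \<omega> / b))"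
    unfolding ssum_def using w assms
    by (simp add: split_set[of x "beta l" bz] sum.union_disjoint[OF fin fin] disjoint_iff)
  also have "(\<Sum>\<omega>\<in>{\<omega>\<in>Omega K. x\<le>\<omega> \<and> \<omega><beta l}. exp (theta (Node az bz h s S l r) \<omega> / b))
     = (\<Sum>\<omega>\<in>{\<omega>\<in>Omega K. x\<le>\<omega> \<and> \<omega><beta l}. exp (s/b) * exp (theta l \<omega> / b))"
  proof (rule sum.cong)
    fix w assume "w \<in> {\<omega>\<in>Omega K. x\<le>\<omega> \<and> \<omega><beta l}"
    then have "theta r w = 0" "az \<le> w" "w < bz" using theta_out[OF w(7), of w] w assms by auto
    then show "exp (theta (Node az bz h s S l r) w / b) = exp (s/b) * exp (theta l w / b)"
      by (simp add: add_divide_distrib exp_add)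
  qed simp
  also have "(\<Sum>\<omega>\<in>{\<omega>\<in>Omega K. beta l\<le>\<omega> \<and> \<omega><bz}. exp (theta (Node az bz h s S l r) \<omega> / b))
     = (\<Sum>\<omega>\<in>{\<omega>\<in>Omega K. alpha r\<le>\<omega> \<and> \<omega><beta r}. exp (s/b) * exp (theta r \<omega> / b))"
  proof (rule sum.cong)
    show "{\<omega>\<in>Omega K. beta l\<le>\<omega> \<and> \<omega><bz} = {\<omega>\<in>Omega K. alpha r\<le>\<omega> \<and> \<omega><beta r}" using w by simp
  next
    fix w assume "w \<in> {\<omega>\<in>Omega K. alpha r\<le>\<omega> \<and> \<omega><beta r}"
    then have "theta l w = 0" "az \<le> w" "w < bz" using theta_out[OF w(6), of w] w assms by auto
    then show "exp (theta (Node az bz h s S l r) w / b) = exp (s/b) * exp (theta r w / b)"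
      by (simp add: add_divide_distrib exp_add)
  qed
  finally show ?thesis unfolding ssum_def by (simp add: sum_distrib_left distrib_left)
qed

lemma split2:
  assumes "wf_tree K b (Node az bz h s S l r)" "alpha r \<le> x"
  shows "ssum K b (Node az bz h s S l r) x = exp (s/b) * ssum K b r x"
proof -
  have w: "az = alpha l" "alpha l < beta l" "beta l = alpha r" "alpha r < beta r" "beta r = bz"
    "wf_tree K b l" "wf_tree K b r" using assms(1) by auto
  show ?thesis unfolding ssum_def sum_distrib_left
  proof (rule sum.cong)
    fix w assume "w \<in> {\<omega>\<in>Omega K. x\<le>\<omega> \<and> \<omega><beta r}"
    then have "theta l w = 0" "az \<le> w" "w < bz" using theta_out[OF w(6), of w] w assms by auto
    then show "exp (theta (Node az bz h s S l r) w / b) = exp (s/b) * exp (theta r w / b)"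
      by (simp add: add_divide_distrib exp_add)
  qed (use w in simp)
qed

lemma lemA: "wf_tree K b t \<Longrightarrow> alpha t < beta t \<Longrightarrow> ssum K b t (alpha t) = 2^K * pnorm t"
proof (induction t)
  case (Leaf a c h s S)
  have "ssum K b (Leaf a c h s S) a = real (card {\<omega>\<in>Omega K. a\<le>\<omega> \<and> \<omega><c}) * exp (s/b)"
    unfolding ssum_def by (subst sum.cong[where h="\<lambda>_. exp (s/b)"]) auto
  also have "\<dots> = 2^K * (c - a) * exp (s/b)" using Leaf by (subst cnt) auto
  finally show ?case using Leaf by simp
next
  case (Node az bz h s S l r)
  then have w: "az = alpha l" "alpha l < beta l" "beta l = alpha r" "alpha r < beta r" "beta r = bz"
    "wf_tree K b l" "wf_tree K b r" "S = exp (s / b) * (pnorm l + pnorm r)" by auto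
  show ?case using split1[OF Node(3), of az] w Node.IH by (simp add: algebra_simps)
qed


lemma loop_price:
  "wf_tree K b t \<Longrightarrow> alpha t \<le> a \<Longrightarrow> a < beta t \<Longrightarrow> a \<in> Omega K \<Longrightarrow>
   fst (alg_loop b a R t P price ops) = price + P * (ssum K b t a / 2^K) / R"
proof (induction t arbitrary: P price ops)
  case (Leaf az bz h s S)
  have "ssum K b (Leaf az bz h s S) a = real (card {\<omega>\<in>Omega K. a\<le>\<omega> \<and> \<omega><bz}) * exp (s/b)"
    unfolding ssum_def using Leaf by (subst sum.cong[where h="\<lambda>_. exp (s/b)"]) auto
  also have "\<dots> = 2^K * (bz - a) * exp (s/b)" using Leaf by (subst cnt) auto
  finally have e: "ssum K b (Leaf az bz h s S) a = 2^K * (bz - a) * exp (s/b)" .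
  have S: "S = exp (s/b) * (bz - az)" and ne: "bz - az \<noteq> 0" using Leaf by auto
  have "fst (alg_loop b a R (Leaf az bz h s S) P price ops) = price + (bz-a)/(bz-az)*(P*S/R)" by simp
  also have "\<dots> = price + P*((2^K * (bz - a) * exp (s/b))/2^K)/R" using ne by (cases "R = 0") (simp_all add: S field_simps)
  finally show ?case unfolding e .
next
  case (Node az bz h s S l r)
  then have w: "az = alpha l" "alpha l < beta l" "beta l = alpha r" "alpha r < beta r" "beta r = bz"
    "wf_tree K b l" "wf_tree K b r" "S = exp (s / b) * (pnorm l + pnorm r)" by auto
  show ?case
  proof (cases "az = a")
    case True
    have "ssum K b (Node az bz h s S l r) a = 2^K * S"
      using lemA[OF Node.prems(1)] Node.prems True by simp
    then show ?thesis using True Node.prems by simp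
  next
    case False
    show ?thesis
    proof (cases "a < alpha r")
      case True
      have ih: "fst (alg_loop b a R l P' pr ops') = pr + P' * (ssum K b l a / 2^K) / R" for P' pr ops'
        using Node.IH(1) w Node.prems True by auto
      have sp: "ssum K b (Node az bz h s S l r) a = exp (s/b) * (ssum K b l a + 2^K * pnorm r)"
        using split1[OF Node.prems(1), of a] Node.prems True w lemA[OF w(7) w(4)] by simp
      show ?thesis using False True by (simp add: ih sp Let_def, cases "R = 0", simp_all add: field_simps)
    next
      case nt: False
      have ih: "fst (alg_loop b a R r P' pr ops') = pr + P' * (ssum K b r a / 2^K) / R" for P' pr ops'
        using Node.IH(2) w Node.prems nt by auto
      have sp: "ssum K b (Node az bz h s S l r) a = exp (s/b) * ssum K b r a"
        using split2[OF Node.prems(1), of a] nt by simp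
      show ?thesis using False nt by (simp add: ih sp Let_def)
    qed
  qed
qed

lemma loop_ops:
  "wf_tree K b t \<Longrightarrow> snd (alg_loop b a R t P price ops) \<le> ops + 9 * (hgt t + 1)"
proof (induction t arbitrary: P price ops)
  case (Leaf az bz h s S) then show ?case by simp
next
  case (Node az bz h s S l r)
  then have w: "h = 1 + max (hgt l) (hgt r)" "wf_tree K b l" "wf_tree K b r" by auto
  have il: "snd (alg_loop b a R l P' pr ops') \<le> ops' + 9 * (hgt l + 1)" for P' pr ops'
    using Node.IH(1) w by blast
  have ir: "snd (alg_loop b a R r P' pr ops') \<le> ops' + 9 * (hgt r + 1)" for P' pr ops'
    using Node.IH(2) w by blast
  show ?case
  proof (cases "az = a")
    case True then show ?thesis by simp
  next
    case False
    show ?thesis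
    proof (cases "a < alpha r")
      case True
      have "snd (alg_loop b a R (Node az bz h s S l r) P price ops)
          = snd (alg_loop b a R l (P * exp (s/b)) (price + P * exp (s/b) * pnorm r / R) (9 + ops))"
        using False True by (simp add: Let_def)
      also have "\<dots> \<le> 9 + ops + 9 * (hgt l + 1)" by (rule il)
      finally show ?thesis using w by simp
    next
      case nt: False
      have "snd (alg_loop b a R (Node az bz h s S l r) P price ops)
          = snd (alg_loop b a R r (P * exp (s/b)) price (6 + ops))"
        using False nt by (simp add: Let_def)
      also have "\<dots> \<le> 6 + ops + 9 * (hgt r + 1)" by (rule ir)
      finally show ?thesis using w by simp
    qed
  qed
qed

lemma Omega_range: assumes "x \<in> Omega K" shows "0 \<le> x \<and> x < 1"
proof -
  obtain j where j: "j < (2::nat)^K" "x = real j / 2^K" using assms unfolding Omega_def by auto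
  have "real j < 2^K" using j(1) by (metis of_nat_less_iff of_nat_numeral of_nat_power)
  then show ?thesis using j(2) by auto
qed

lemma alpha_in: "alpha t \<in> alphas t" by (cases t) auto

lemma pow_bound:
  assumes "\<bar>int p - int q\<bar> \<le> 1"
  shows "(2::nat)^((1 + max p q) div 2) \<le> 2^(p div 2) + 2^(q div 2)"
proof -
  define m where "m = max p q"
  define k where "k = (1 + m) div 2"
  have "k - 1 \<le> p div 2" "k - 1 \<le> q div 2" "k \<le> max (p div 2) (q div 2) \<or> (k - 1 \<le> p div 2 \<and> k - 1 \<le> q div 2 \<and> k \<ge> 1)"
    using assms unfolding k_def m_def by (auto simp: max_def split: if_splits)
  then consider "k \<le> p div 2" | "k \<le> q div 2" | "k \<ge> 1" "k - 1 \<le> p div 2" "k - 1 \<le> q div 2"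
    by (auto simp: max_def split: if_splits)
  then have "(2::nat)^k \<le> 2^(p div 2) + 2^(q div 2)"
  proof cases
    case 1 then have "(2::nat)^k \<le> 2^(p div 2)" by (intro power_increasing) auto
    then show ?thesis by linarith
  next
    case 2 then have "(2::nat)^k \<le> 2^(q div 2)" by (intro power_increasing) auto
    then show ?thesis by linarith
  next
    case 3
    have "(2::nat)^k = 2^(k-1) + 2^(k-1)" using 3(1) by (cases k) auto
    also have "\<dots> \<le> 2^(p div 2) + 2^(q div 2)"
      using power_increasing[of "k-1" "p div 2" "2::nat"] power_increasing[of "k-1" "q div 2" "2::nat"] 3
      by (intro add_mono) auto
    finally show ?thesis .
  qed
  then show ?thesis unfolding k_def m_def .
qed

lemma card_alphas:
  "wf_tree K b t \<Longrightarrow> alpha t < beta t \<Longrightarrow>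
   alphas t \<subseteq> {alpha t..<beta t} \<and> finite (alphas t) \<and> 2^(hgt t div 2) \<le> card (alphas t)"
proof (induction t)
  case (Leaf az bz h s S) then show ?case by simp
next
  case (Node az bz h s S l r)
  then have w: "az = alpha l" "alpha l < beta l" "beta l = alpha r" "alpha r < beta r" "beta r = bz"
    "h = 1 + max (hgt l) (hgt r)" "\<bar>int (hgt l) - int (hgt r)\<bar> \<le> 1" by auto
  from Node w have L: "alphas l \<subseteq> {alpha l..<beta l}" "finite (alphas l)" "2^(hgt l div 2) \<le> card (alphas l)"
    and R: "alphas r \<subseteq> {alpha r..<beta r}" "finite (alphas r)" "2^(hgt r div 2) \<le> card (alphas r)"
    by auto
  have eq: "alphas (Node az bz h s S l r) = alphas l \<union> alphas r" using alpha_in[of l] w by auto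
  have dj: "alphas l \<inter> alphas r = {}" using L(1) R(1) w by fastforce
  have c: "card (alphas (Node az bz h s S l r)) = card (alphas l) + card (alphas r)"
    using eq dj L(2) R(2) by (simp add: card_Un_disjoint)
  have "2^(h div 2) \<le> card (alphas l) + card (alphas r)"
    using pow_bound[OF w(7)] w(6) L(3) R(3) by simp
  then show ?case using eq c L R w by auto
qed

theorem theorem1:
  "\<exists>C::real. \<forall>(K::nat) (b::real) (T::ltree) (a::real).
     K \<ge> 1 \<and> b > 0 \<and> lmsr_tree K b T \<and> a \<in> Omega K \<longrightarrow>
       fst (algorithm1 b a T) = lmsr_price K b (theta T) {\<omega> \<in> Omega K. a \<le> \<omega> \<and> \<omega> < 1} \<and>
       real (snd (algorithm1 b a T)) \<le> C * (1 + log 2 (real (card (alphas T))))"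
proof (intro exI[of _ 18] allI impI conjI)
  fix K b T a
  assume A: "1 \<le> K \<and> 0 < (b::real) \<and> lmsr_tree K b T \<and> a \<in> Omega K"
  then have wf: "wf_tree K b T" and a0: "alpha T = 0" and b1: "beta T = 1" and aO: "a \<in> Omega K"
    unfolding lmsr_tree_def by auto
  obtain j where j: "j < (2::nat)^K" "a = real j / 2^K" using aO unfolding Omega_def by auto
  have "real j < 2^K" using j(1) by (metis of_nat_less_iff of_nat_numeral of_nat_power)
  then have a01: "0 \<le> a" "a < 1" using j(2) by auto
  have sr: "ssum K b T 0 = 2^K * pnorm T" using lemA[OF wf] a0 b1 by simp
  have om: "{\<omega>\<in>Omega K. 0\<le>\<omega> \<and> \<omega><1} = Omega K"
    using Omega_range by auto
  have "fst (algorithm1 b a T) = (ssum K b T a / 2^K) / pnorm T"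
    unfolding algorithm1_def using loop_price[OF wf] a0 b1 a01 aO by simp
  also have "\<dots> = ssum K b T a / ssum K b T 0" using sr by simp
  also have "\<dots> = lmsr_price K b (theta T) {\<omega> \<in> Omega K. a \<le> \<omega> \<and> \<omega> < 1}"
    unfolding lmsr_price_def ssum_def b1 om ..
  finally show "fst (algorithm1 b a T) = lmsr_price K b (theta T) {\<omega> \<in> Omega K. a \<le> \<omega> \<and> \<omega> < 1}" .
  define h where "h = hgt T"
  define c where "c = card (alphas T)"
  have ops: "snd (algorithm1 b a T) \<le> 9 * (h + 1)"
    unfolding algorithm1_def h_def using loop_ops[OF wf] by (metis add_0)
  have hc: "2^(h div 2) \<le> c" using card_alphas[OF wf] a0 b1 unfolding h_def c_def by simp
  then have cpos: "real c > 0" by (metis le_zero_eq less_eq_real_def of_nat_0_less_iff pos2 zero_less_power not_less)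
  have "real (2^(h div 2)) \<le> real c" using hc by linarith
  then have "log 2 (2 ^ (h div 2)) \<le> log 2 (real c)" using cpos by (subst log_le_cancel_iff) auto
  moreover have "log 2 ((2::real) ^ (h div 2)) = real (h div 2)" by simp
  ultimately have "real (h div 2) \<le> log 2 (real c)" by simp
  moreover have "real h \<le> 2 * real (h div 2) + 1" by linarith
  ultimately have "real h \<le> 2 * log 2 (real c) + 1" by linarith
  then show "real (snd (algorithm1 b a T)) \<le> 18 * (1 + log 2 (real (card (alphas T))))"
  proof -
    have "real (snd (algorithm1 b a T)) \<le> real (9 * (h + 1))" using ops of_nat_le_iff by blast
    then show ?thesis unfolding c_def[symmetric] using \<open>real h \<le> 2 * log 2 (real c) + 1\<close> by simp
  qed
qed

end
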